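(* Let $g_*$ be the standard metric on $\mathbb{S}^2$, let $f>0$ be a smooth function on $[a,b]$, and consider the metric $\gamma=ds^2+f(s)^2g_*$ on $[a,b]\times\mathbb{S}^2$. Suppose (1) $\gamma$ has positive scalar curvature; (2) $\Sigma_b:=\{b\}\times\mathbb{S}^2$ has positive mean curvature; and (3) $\mathfrak{m}_{_H}(\Sigma_b)\ge 0$. Then for any $m_e>\mathfrak{m}_{_H}(\Sigma_b)$ there exists a smooth, rotationally symmetric, asymptotically flat Riemannian $3$-manifold $M$ with boundary $\partial M$ and non-negative scalar curvature such that (i) outside a compact set, $M$ is isometric to a spatial Schwarzschild manifold of mass $m_e$; (ii) $\partial M$ has a neighborhood $U$ isometric to $\left([a,\frac{a+b}{2})\times\mathbb{S}^2,\gamma\right)$; and (iii) if $f'>0$ on $[a,b]$, then $M$ can be constructed such that every rotationally symmetric sphere in $M$ has positive constant mean curvature.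
   Context: The mean curvature of $\Sigma_b$ is computed with respect to the unit normal $\partial_s$ (so it equals $2f'(b)/f(b)$). The Hawking mass of a closed surface $S$ with induced metric and mean curvature $H$ is $\mathfrak{m}_{_H}(S)=\sqrt{\frac{|S|}{16\pi}}\left(1-\frac{1}{16\pi}\int_S H^2\,d\sigma\right)$; for $\Sigma_b$ it equals $\frac{f(b)}{2}(1-f'(b)^2)$. The spatial Schwarzschild manifold of mass $m>0$ is $\left((2m,\infty)\times\mathbb{S}^2,\ \frac{1}{1-2m/r}dr^2+r^2g_*\right)$. *)

theory Defs
  imports "HOL-Analysis.Analysis"
begin

text \<open>Smoothness of a real function on a set S: f is infinitely differentiable
  on some open set containing S (for closed intervals this is equivalent to
  smoothness up to the boundary, by Seeley/Whitney extension).  On the open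
  set U every iterated deriv is a genuine derivative.\<close>
definition smooth_on :: "real set \<Rightarrow> (real \<Rightarrow> real) \<Rightarrow> bool" where
  "smooth_on S f \<longleftrightarrow> (\<exists>U. open U \<and> S \<subseteq> U \<and>
      (\<forall>k::nat. \<forall>x\<in>U. ((deriv ^^ k) f) differentiable (at x)))"

text \<open>Rotationally symmetric (warped product) metric ds^2 + F(s)^2 g_* on
  I x S^2, with g_* the round unit metric on S^2.\<close>

definition warped_scal :: "(real \<Rightarrow> real) \<Rightarrow> real \<Rightarrow> real" where
  "warped_scal F s =
     (2 * (1 - (deriv F s)\<^sup>2) - 4 * F s * deriv (deriv F) s) / (F s)\<^sup>2"

text \<open>Mean curvature of the sphere {s} x S^2 with respect to the unit normal d/ds.\<close>
definition warped_mean_curv :: "(real \<Rightarrow> real) \<Rightarrow> real \<Rightarrow> real" where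
  "warped_mean_curv F s = 2 * deriv F s / F s"

definition warped_hawking_mass :: "(real \<Rightarrow> real) \<Rightarrow> real \<Rightarrow> real" where
  "warped_hawking_mass F s = F s / 2 * (1 - (deriv F s)\<^sup>2)"

text \<open>The warped product ([s1,\<infinity>) x S^2, ds^2 + F^2 g_*) is isometric (via r = F(s))
  to the exterior region {r \<ge> F s1} of the spatial Schwarzschild manifold of mass m:
  F > 2m and dF/ds = sqrt(1 - 2m/F) there.\<close>
definition schwarzschild_end :: "real \<Rightarrow> (real \<Rightarrow> real) \<Rightarrow> real \<Rightarrow> bool" where
  "schwarzschild_end m F s1 \<longleftrightarrow>
     (\<forall>s\<ge>s1. F s > 2 * m \<and> deriv F s = sqrt (1 - 2 * m / F s))"

end

theory Submission
  imports Defs "HOL-Computational_Algebra.Polynomial"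
begin

fun Ck :: "nat \<Rightarrow> real set \<Rightarrow> (real \<Rightarrow> real) \<Rightarrow> bool" where
  "Ck 0 U f = True"
| "Ck (Suc k) U f = ((\<forall>x\<in>U. f differentiable (at x)) \<and> Ck k U (deriv f))"

definition sm :: "real set \<Rightarrow> (real \<Rightarrow> real) \<Rightarrow> bool" where
  "sm U f \<longleftrightarrow> (\<forall>k. Ck k U f)"

lemma Ck_Suc_iff: "Ck (Suc k) U f \<longleftrightarrow> (\<forall>j\<le>k. \<forall>x\<in>U. (deriv ^^ j) f differentiable (at x))"
proof (induction k arbitrary: f)
  case 0 then show ?case by simp
next
  case (Suc k)
  have "Ck (Suc (Suc k)) U f = ((\<forall>x\<in>U. f differentiable (at x)) \<and> (\<forall>j\<le>k. \<forall>x\<in>U. (deriv ^^ Suc j) f differentiable (at x)))"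
    using Suc[of "deriv f"] by (simp add: funpow_Suc_right del: funpow.simps)
  also have "\<dots> = (\<forall>j\<le>Suc k. \<forall>x\<in>U. (deriv ^^ j) f differentiable (at x))"
    apply (rule iffI)
     apply (metis (no_types, lifting) Suc_le_mono funpow_0 not0_implies_Suc)
    by (metis Suc_le_mono funpow_0 le0)
  finally show ?case .
qed

lemma sm_iff: "sm U f \<longleftrightarrow> (\<forall>k. \<forall>x\<in>U. (deriv ^^ k) f differentiable (at x))"
  unfolding sm_def
  by (metis Ck.simps(1) Ck_Suc_iff le_refl not0_implies_Suc)

lemma deriv_local:
  fixes f g :: "real \<Rightarrow> real"
  assumes "open U" "x \<in> U" "\<And>y. y \<in> U \<Longrightarrow> f y = g y"
  shows "(f differentiable (at x) \<longleftrightarrow> g differentiable (at x)) \<and> deriv f x = deriv g x"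
proof -
  have eq: "\<And>D. (f has_real_derivative D) (at x) \<longleftrightarrow> (g has_real_derivative D) (at x)"
    using assms by (metis has_field_derivative_transform_within_open)
  then have "(\<lambda>D. (f has_real_derivative D) (at x)) = (\<lambda>D. (g has_real_derivative D) (at x))"
    by auto
  then show ?thesis
    unfolding deriv_def real_differentiable_def by (metis eq)
qed

lemma Ck_cong:
  assumes "open U" "\<And>y. y \<in> U \<Longrightarrow> f y = g y" "Ck k U f"
  shows "Ck k U g"
  using assms
proof (induction k arbitrary: f g)
  case 0 then show ?case by simp
next
  case (Suc k)
  have d: "\<And>x. x \<in> U \<Longrightarrow> deriv f x = deriv g x" "\<And>x. x \<in> U \<Longrightarrow> (f differentiable (at x) \<longleftrightarrow> g differentiable (at x))"
    using deriv_local[OF Suc.prems(1) _ Suc.prems(2)] by auto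
  show ?case using Suc.prems(3) d Suc.IH[OF Suc.prems(1), of "deriv f" "deriv g"] by auto
qed

lemma Ck_Suc_imp: "Ck (Suc k) U f \<Longrightarrow> Ck k U f"
  by (induction k arbitrary: f) auto

lemma Ck_le: "Ck k U f \<Longrightarrow> j \<le> k \<Longrightarrow> Ck j U f"
proof (induction k)
  case (Suc k) then show ?case
    by (metis Ck_Suc_imp le_Suc_eq)
qed simp

lemma Ck_subset: "Ck k U f \<Longrightarrow> V \<subseteq> U \<Longrightarrow> Ck k V f"
  by (induction k arbitrary: f) auto

lemma Ck_union: "Ck k U f \<Longrightarrow> Ck k V f \<Longrightarrow> Ck k (U \<union> V) f"
  by (induction k arbitrary: f) auto

lemma Ck_const: "Ck k U (\<lambda>x. c)"
proof (induction k arbitrary: c)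
  case (Suc k)
  have "deriv (\<lambda>x. c) = (\<lambda>x. 0)" by (rule ext) (rule DERIV_imp_deriv, simp)
  then show ?case using Suc by simp
qed simp

lemma Ck_id: "Ck k U (\<lambda>x. x)"
proof (cases k)
  case (Suc j)
  have "deriv (\<lambda>x. x) = (\<lambda>x. 1)" by (rule ext) (rule DERIV_imp_deriv, simp)
  then show ?thesis using Suc Ck_const by simp
qed simp

lemma dd: fixes f :: "real \<Rightarrow> real" shows "f differentiable (at x) \<Longrightarrow> DERIV f x :> deriv f x"
  by (simp add: DERIV_deriv_iff_real_differentiable)

lemma Ck_add:
  assumes "open U" "Ck k U f" "Ck k U g"
  shows "Ck k U (\<lambda>x. f x + g x)"
  using assms(2,3)
proof (induction k arbitrary: f g)
  case (Suc k)
  have e: "\<And>x. x \<in> U \<Longrightarrow> deriv f x + deriv g x = deriv (\<lambda>x. f x + g x) x"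
  proof -
    fix x assume "x \<in> U"
    then have "DERIV f x :> deriv f x" "DERIV g x :> deriv g x" using Suc.prems dd by auto
    from DERIV_add[OF this] show "deriv f x + deriv g x = deriv (\<lambda>x. f x + g x) x"
      by (metis DERIV_imp_deriv)
  qed
  have c: "Ck k U (\<lambda>x. deriv f x + deriv g x)" using Suc by simp
  have "Ck k U (deriv (\<lambda>x. f x + g x))" by (rule Ck_cong[OF assms(1) e c])
  moreover have "\<forall>x\<in>U. (\<lambda>x. f x + g x) differentiable (at x)"
    using Suc.prems by auto
  ultimately show ?case by simp
qed simp

lemma Ck_mult:
  assumes "open U" "Ck k U f" "Ck k U g"
  shows "Ck k U (\<lambda>x. f x * g x)"
  using assms(2,3)
proof (induction k arbitrary: f g)
  case (Suc k)
  have fd: "\<forall>x\<in>U. f differentiable (at x)" and gd: "\<forall>x\<in>U. g differentiable (at x)"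
    and g1: "Ck k U (deriv g)" and f1: "Ck k U (deriv f)" using Suc.prems by simp_all
  have f0: "Ck k U f" using Suc.prems(1) by (rule Ck_Suc_imp)
  have g0: "Ck k U g" using Suc.prems(2) by (rule Ck_Suc_imp)
  have D: "DERIV (\<lambda>x. f x * g x) x :> deriv f x * g x + f x * deriv g x" if x: "x \<in> U" for x
  proof -
    have 1: "DERIV f x :> deriv f x" using fd x dd by blast
    have 2: "DERIV g x :> deriv g x" using gd x dd by blast
    from DERIV_mult'[OF 1 2] show ?thesis by (simp add: algebra_simps)
  qed
  have c: "Ck k U (\<lambda>x. deriv f x * g x + f x * deriv g x)"
    by (rule Ck_add[OF assms(1)]) (rule Suc.IH[OF f1 g0], rule Suc.IH[OF f0 g1])
  have e: "\<And>x. x \<in> U \<Longrightarrow> deriv f x * g x + f x * deriv g x = deriv (\<lambda>x. f x * g x) x"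
    using D by (metis DERIV_imp_deriv)
  have "Ck k U (deriv (\<lambda>x. f x * g x))" by (rule Ck_cong[OF assms(1) e c])
  moreover have "\<forall>x\<in>U. (\<lambda>x. f x * g x) differentiable (at x)"
    using D real_differentiable_def by blast
  ultimately show ?case by simp
qed simp

lemma Ck_comp:
  assumes "open U" "open V" "\<And>x. x \<in> U \<Longrightarrow> f x \<in> V" "Ck k V g" "Ck k U f"
  shows "Ck k U (\<lambda>x. g (f x))"
  using assms(4,5)
proof (induction k arbitrary: g)
  case (Suc k)
  have gd: "\<forall>x\<in>V. g differentiable (at x)" and fd: "\<forall>x\<in>U. f differentiable (at x)"
    and g1: "Ck k V (deriv g)" and f1: "Ck k U (deriv f)" using Suc.prems by simp_all
  have f0: "Ck k U f" using Suc.prems(2) by (rule Ck_Suc_imp)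
  have D: "DERIV (\<lambda>x. g (f x)) x :> deriv g (f x) * deriv f x" if x: "x \<in> U" for x
  proof -
    have "g differentiable (at (f x))" using gd assms(3)[OF x] by (rule bspec)
    then have "DERIV g (f x) :> deriv g (f x)" by (rule dd)
    moreover have "DERIV f x :> deriv f x" using fd x dd by blast
    ultimately show ?thesis by (rule DERIV_chain2)
  qed
  have "Ck k U (\<lambda>x. deriv g (f x))" using Suc.IH[OF g1 f0] .
  then have c: "Ck k U (\<lambda>x. deriv g (f x) * deriv f x)"
    using f1 by (rule Ck_mult[OF assms(1)])
  have e: "\<And>x. x \<in> U \<Longrightarrow> deriv g (f x) * deriv f x = deriv (\<lambda>x. g (f x)) x"
    using D by (metis DERIV_imp_deriv)
  have "Ck k U (deriv (\<lambda>x. g (f x)))" by (rule Ck_cong[OF assms(1) e c])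
  moreover have "\<forall>x\<in>U. (\<lambda>x. g (f x)) differentiable (at x)"
    using D real_differentiable_def by blast
  ultimately show ?case by simp
qed simp


lemma Ck_SucI:
  assumes "open U" "\<And>x. x \<in> U \<Longrightarrow> DERIV f x :> f' x" "Ck k U f'"
  shows "Ck (Suc k) U f"
proof -
  have e: "\<And>x. x \<in> U \<Longrightarrow> f' x = deriv f x" using assms(2) by (metis DERIV_imp_deriv)
  have "Ck k U (deriv f)" by (rule Ck_cong[OF assms(1) e assms(3)])
  moreover have "\<forall>x\<in>U. f differentiable (at x)" using assms(2) real_differentiable_def by blast
  ultimately show ?thesis by simp
qed

lemma Ck_cmult: "open U \<Longrightarrow> Ck k U f \<Longrightarrow> Ck k U (\<lambda>x. c * f x)"
  using Ck_mult[OF _ Ck_const] by blast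

lemma Ck_neg: "open U \<Longrightarrow> Ck k U f \<Longrightarrow> Ck k U (\<lambda>x. - f x)"
  using Ck_cmult[of U k f "-1"] by simp

lemma Ck_diff: "open U \<Longrightarrow> Ck k U f \<Longrightarrow> Ck k U g \<Longrightarrow> Ck k U (\<lambda>x. f x - g x)"
  using Ck_add[OF _ _ Ck_neg, of U k f g] by simp

lemma Ck_inverse: "Ck k (-{0}) inverse"
proof (induction k)
  case (Suc k)
  have o: "open (-{0::real})" by (simp add: open_Compl)
  have "Ck k (-{0}) (\<lambda>x. inverse x * inverse x)" by (rule Ck_mult[OF o Suc Suc])
  then have "Ck k (-{0}) (\<lambda>x. - (inverse x * inverse x))" by (rule Ck_neg[OF o])
  moreover have "\<And>x. x \<in> -{0} \<Longrightarrow> DERIV inverse x :> - (inverse x * inverse x)"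
    using DERIV_inverse by (fastforce simp: power2_eq_square)
  ultimately show ?case by (intro Ck_SucI[OF o]) auto
qed simp

lemma Ck_inverse_comp:
  assumes "open U" "Ck k U f" "\<And>x. x \<in> U \<Longrightarrow> f x \<noteq> 0"
  shows "Ck k U (\<lambda>x. inverse (f x))"
  by (rule Ck_comp[OF assms(1) _ _ Ck_inverse assms(2)]) (use assms(3) in \<open>auto simp: open_Compl\<close>)

lemma Ck_sqrt: "Ck k {0<..} sqrt"
proof (induction k)
  case (Suc k)
  have "Ck k {0<..} (\<lambda>x. inverse (sqrt x) / 2)"
    using Ck_cmult[OF _ Ck_inverse_comp[OF _ Suc], of "1/2"] by simp
  moreover have "\<And>x. x \<in> {0<..} \<Longrightarrow> DERIV sqrt x :> inverse (sqrt x) / 2"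
    using DERIV_real_sqrt by simp
  ultimately show ?case by (intro Ck_SucI) auto
qed simp

lemma Ck_sqrt_comp:
  assumes "open U" "Ck k U f" "\<And>x. x \<in> U \<Longrightarrow> f x > 0"
  shows "Ck k U (\<lambda>x. sqrt (f x))"
  by (rule Ck_comp[OF assms(1) _ _ Ck_sqrt assms(2)]) (use assms(3) in auto)

lemma Ck_exp: "Ck k UNIV exp"
proof (induction k)
  case (Suc k)
  show ?case by (rule Ck_SucI[OF _ _ Suc]) (auto intro: DERIV_exp)
qed simp

section \<open>Flat function\<close>

definition hp :: "real poly \<Rightarrow> real \<Rightarrow> real" where
  "hp p x = (if 0 < x then poly p (inverse x) * exp (- inverse x) else 0)"

definition Dp :: "real poly \<Rightarrow> real poly" where
  "Dp p = monom 1 2 * (p - pderiv p)"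

lemma poly_exp_lim: "((\<lambda>t. poly (q::real poly) t * exp (- t)) \<longlongrightarrow> 0) at_top"
proof -
  have "((\<lambda>t. \<Sum>i\<le>degree q. coeff q i * (t ^ i / exp t)) \<longlongrightarrow> 0) at_top"
    by (intro tendsto_null_sum tendsto_mult_right_zero tendsto_power_div_exp_0)
  moreover have "\<And>t. (\<Sum>i\<le>degree q. coeff q i * (t ^ i / exp t)) = poly q t * exp (- t)"
    by (simp add: poly_altdef sum_distrib_right exp_minus divide_inverse mult.assoc)
  ultimately show ?thesis by simp
qed

lemma hp_deriv_pos:
  assumes "0 < x"
  shows "DERIV (hp p) x :> hp (Dp p) x"
proof -
  have d: "DERIV (\<lambda>x. poly p (inverse x) * exp (- inverse x)) x :>
      poly (pderiv p) (inverse x) * (- (inverse x * inverse x)) * exp (- inverse x)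
      + poly p (inverse x) * (exp (- inverse x) * (inverse x * inverse x))"
    using assms
    by (auto intro!: derivative_eq_intros DERIV_chain2[OF poly_DERIV] simp: power2_eq_square)
  have "poly (pderiv p) (inverse x) * (- (inverse x * inverse x)) * exp (- inverse x)
      + poly p (inverse x) * (exp (- inverse x) * (inverse x * inverse x)) = hp (Dp p) x"
    using assms by (simp add: hp_def Dp_def poly_monom algebra_simps power2_eq_square)
  with d have "DERIV (\<lambda>x. poly p (inverse x) * exp (- inverse x)) x :> hp (Dp p) x" by simp
  then show ?thesis
    by (rule has_field_derivative_transform_within_open[where S="{0<..}"]) (use assms in \<open>auto simp: hp_def\<close>)
qed

lemma hp_deriv_neg:
  assumes "x < 0"
  shows "DERIV (hp p) x :> hp (Dp p) x"
proof -
  have "DERIV (\<lambda>x. 0) x :> 0" by simp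
  then have "DERIV (hp p) x :> 0"
    by (rule has_field_derivative_transform_within_open[where S="{..<0}"]) (use assms in \<open>auto simp: hp_def\<close>)
  then show ?thesis using assms by (simp add: hp_def)
qed

lemma hp_deriv_zero: "DERIV (hp p) 0 :> hp (Dp p) 0"
proof -
  have r: "((\<lambda>y. hp p y / y) \<longlongrightarrow> 0) (at_right 0)"
  proof -
    have "((\<lambda>t. poly (pCons 0 p) t * exp (- t)) \<longlongrightarrow> 0) at_top" by (rule poly_exp_lim)
    from filterlim_compose[OF this filterlim_inverse_at_top_right]
    have "((\<lambda>y. poly (pCons 0 p) (inverse y) * exp (- inverse y)) \<longlongrightarrow> 0) (at_right 0)" .
    moreover have "eventually (\<lambda>y. poly (pCons 0 p) (inverse y) * exp (- inverse y) = hp p y / y) (at_right 0)"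
      by (auto simp: eventually_at_right_field hp_def divide_inverse intro!: exI[of _ 1])
    ultimately show ?thesis by (rule Lim_transform_eventually)
  qed
  have l: "((\<lambda>y. hp p y / y) \<longlongrightarrow> 0) (at_left 0)"
  proof -
    have "eventually (\<lambda>y. 0 = hp p y / y) (at_left 0)"
      by (auto simp: eventually_at_left_field hp_def intro!: exI[of _ "-1"])
    then show ?thesis by (rule Lim_transform_eventually[rotated]) simp
  qed
  have "((\<lambda>y. (hp p y - hp p 0) / (y - 0)) \<longlongrightarrow> 0) (at 0)"
    using filterlim_at_split[THEN iffD2, OF conjI[OF l r]] by (simp add: hp_def)
  then show ?thesis by (simp add: has_field_derivative_iff hp_def)
qed

lemma hp_deriv: "DERIV (hp p) x :> hp (Dp p) x"
  using hp_deriv_pos hp_deriv_neg hp_deriv_zero by (metis linorder_neqE_linordered_idom)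

lemma Ck_hp: "Ck k UNIV (hp p)"
proof (induction k arbitrary: p)
  case (Suc k)
  show ?case by (rule Ck_SucI[OF _ _ Suc]) (auto intro: hp_deriv)
qed simp


abbreviation hh :: "real \<Rightarrow> real" where "hh \<equiv> hp 1"

lemma hh_nonneg: "hh x \<ge> 0" by (simp add: hp_def)
lemma hh_pos: "x > 0 \<Longrightarrow> hh x > 0" by (simp add: hp_def)
lemma hh_zero: "x \<le> 0 \<Longrightarrow> hh x = 0" by (simp add: hp_def)
lemma hh1_nonneg: "hp (Dp 1) x \<ge> 0" by (simp add: hp_def Dp_def poly_monom)

lemma hh_den_pos: "hh x + hh (1 - x) > 0"
proof (cases "x > 0")
  case True then show ?thesis using hh_pos[of x] hh_nonneg[of "1-x"] by linarith
next
  case False then show ?thesis using hh_pos[of "1-x"] hh_nonneg[of x] by linarith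
qed

lemma alg: fixes N M N' M' :: real assumes "N + M \<noteq> 0"
  shows "N * (- (inverse (N + M) * (N' + M' * (0 - 1)) * inverse (N + M))) + N' * inverse (N + M) = (N' * M + N * M') * (inverse (N + M))^2"
proof -
  define i where "i = inverse (N + M)"
  have 1: "i * (N + M) = 1" using assms by (simp add: i_def)
  have "N * (- (i * (N' + M' * (0 - 1)) * i)) + N' * i - (N' * M + N * M') * i^2 = N' * i - N' * (i * (N + M)) * i"
    by (simp add: algebra_simps power2_eq_square)
  also have "\<dots> = 0" using 1 by simp
  finally show ?thesis unfolding i_def by simp
qed

definition stp :: "real \<Rightarrow> real" where
  "stp x = hh x * inverse (hh x + hh (1 - x))"

lemma stp_0: "x \<le> 0 \<Longrightarrow> stp x = 0" by (simp add: stp_def hh_zero)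
lemma stp_1: "x \<ge> 1 \<Longrightarrow> stp x = 1"
  using hh_den_pos[of x] by (simp add: stp_def hh_zero)
lemma stp_ge0: "stp x \<ge> 0" using hh_den_pos[of x] hh_nonneg[of x] by (simp add: stp_def)
lemma stp_le1: "stp x \<le> 1"
  using hh_den_pos[of x] hh_nonneg[of x] hh_nonneg[of "1-x"] by (simp add: stp_def field_simps)

lemma Ck_stp: "Ck k UNIV stp"
proof -
  have a: "Ck k UNIV (\<lambda>x. hh (1 - x))"
    by (rule Ck_comp[OF _ _ _ Ck_hp Ck_diff[OF _ Ck_const Ck_id]]) auto
  have "Ck k UNIV (\<lambda>x. hh x + hh (1 - x))" by (rule Ck_add[OF _ Ck_hp a]) simp
  then have "Ck k UNIV (\<lambda>x. inverse (hh x + hh (1 - x)))"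
    by (rule Ck_inverse_comp[OF open_UNIV]) (use hh_den_pos in \<open>metis less_irrefl\<close>)
  from Ck_mult[OF open_UNIV Ck_hp this] show ?thesis unfolding stp_def[abs_def] .
qed

lemma stp_deriv: "\<exists>D. DERIV stp x :> D \<and> D \<ge> 0"
proof -
  let ?N = "hh x" and ?M = "hh (1 - x)" and ?N' = "hp (Dp 1) x" and ?M' = "hp (Dp 1) (1 - x)"
  have dM: "DERIV (\<lambda>x. hh (1 - x)) x :> ?M' * (0 - 1)"
    by (rule DERIV_chain2[OF hp_deriv]) (auto intro!: derivative_eq_intros)
  have den: "?N + ?M \<noteq> 0" using hh_den_pos[of x] by simp
  have d: "DERIV stp x :> ?N * (- (inverse (?N + ?M) * (?N' + ?M' * (0 - 1)) * inverse (?N + ?M))) + ?N' * inverse (?N + ?M)"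
    unfolding stp_def[abs_def]
    by (rule DERIV_mult'[OF hp_deriv DERIV_inverse'[OF DERIV_add[OF hp_deriv dM] den]])
  have "?N * (- (inverse (?N + ?M) * (?N' + ?M' * (0 - 1)) * inverse (?N + ?M))) + ?N' * inverse (?N + ?M)
      = (?N' * ?M + ?N * ?M') * (inverse (?N + ?M))^2"
    by (rule alg[OF den])
  moreover have "(?N' * ?M + ?N * ?M') * (inverse (?N + ?M))^2 \<ge> 0"
    using hh_nonneg hh1_nonneg by simp
  ultimately show ?thesis using d by metis
qed

section \<open>Inverse functions\<close>

lemma inv_DERIV:
  fixes f g :: "real \<Rightarrow> real"
  assumes "open V" "y \<in> V" "DERIV f (g y) :> D" "D \<noteq> 0"
    "\<And>y. y \<in> V \<Longrightarrow> f (g y) = y" "isCont g y"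
  shows "DERIV g y :> inverse D"
proof -
  obtain e where e: "e > 0" "ball y e \<subseteq> V" using assms(1,2) open_contains_ball by blast
  show ?thesis
  proof (rule DERIV_inverse_function[where f=f and g=g and a="y-e" and b="y+e", OF assms(3,4)])
    fix z assume "y - e < z" "z < y + e"
    then have "z \<in> ball y e" by (auto simp: dist_real_def)
    then show "f (g z) = z" using e assms(5) by blast
  qed (use e assms(6) in auto)
qed

lemma Ck_inv:
  fixes f g :: "real \<Rightarrow> real"
  assumes oU: "open U" and oV: "open V" and gU: "\<And>y. y \<in> V \<Longrightarrow> g y \<in> U"
    and fg: "\<And>y. y \<in> V \<Longrightarrow> f (g y) = y" and cg: "\<And>y. y \<in> V \<Longrightarrow> isCont g y"
    and d0: "\<And>x. x \<in> U \<Longrightarrow> deriv f x \<noteq> 0" and sf: "\<And>k. Ck k U f"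
  shows "Ck k V g"
proof (induction k)
  case (Suc k)
  have fd: "\<forall>x\<in>U. f differentiable (at x)" using sf[of "Suc 0"] by simp
  have f1: "Ck k U (deriv f)" using sf[of "Suc k"] by simp
  have D: "DERIV g y :> inverse (deriv f (g y))" if y: "y \<in> V" for y
  proof (rule inv_DERIV[OF oV y _ _ fg cg[OF y]])
    show "DERIV f (g y) :> deriv f (g y)" using fd gU[OF y] dd by blast
    show "deriv f (g y) \<noteq> 0" using d0 gU[OF y] by blast
  qed
  have "Ck k V (\<lambda>y. deriv f (g y))" by (rule Ck_comp[OF oV oU gU f1 Suc])
  then have "Ck k V (\<lambda>y. inverse (deriv f (g y)))"
  proof (rule Ck_inverse_comp[OF oV])
    show "\<And>y. y \<in> V \<Longrightarrow> deriv f (g y) \<noteq> 0" by (simp add: d0 gU)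
  qed
  from Ck_SucI[OF oV D this] show ?case .
qed simp

section \<open>Integrals\<close>

lemma int_DERIV:
  fixes g :: "real \<Rightarrow> real"
  assumes "\<And>x. x \<ge> c \<Longrightarrow> isCont g x" "r > c"
  shows "DERIV (\<lambda>r. integral {c..r} g) r :> g r"
proof -
  have "continuous_on {c..r+1} g"
    by (intro continuous_at_imp_continuous_on ballI assms(1)) simp
  moreover have r: "r \<in> {c..r+1}" using assms(2) by simp
  ultimately have "((\<lambda>r. integral {c..r} g) has_real_derivative g r) (at r within {c..r+1})"
    by (rule integral_has_real_derivative)
  moreover have "at r within {c..r+1} = at r"
    by (rule at_within_interior) (use assms(2) in \<open>simp add: interior_atLeastAtMost_real\<close>)
  ultimately show ?thesis by simp
qed

lemma int_cont:
  fixes g :: "real \<Rightarrow> real"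
  assumes "\<And>x. x \<ge> c \<Longrightarrow> isCont g x"
  shows "continuous_on {c..R} (\<lambda>r. integral {c..r} g)"
proof -
  have "continuous_on {c..R} g"
    by (intro continuous_at_imp_continuous_on ballI assms(1)) simp
  from integral_has_real_derivative[OF this]
  show ?thesis by (rule DERIV_continuous_on)
qed


locale constr =
  fixes f :: "real \<Rightarrow> real" and a b m_e p :: real and Uf :: "real set"
  assumes ab: "a < b" and oUf: "open Uf" and abU: "{a..b} \<subseteq> Uf"
    and smf: "\<And>k. Ck k Uf f"
    and f_pos: "\<forall>s\<in>{a..b}. f s > 0"
    and psc: "\<forall>s\<in>{a..b}. warped_scal f s > 0"
    and hawk: "warped_hawking_mass f b \<ge> 0"
    and me: "m_e > warped_hawking_mass f b"
    and p1: "(a+b)/2 < p" and p2: "p < b" and pf1: "\<forall>s\<in>{p..b}. deriv f s > 0"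
begin

abbreviation "f1 \<equiv> deriv f"
abbreviation "f2 \<equiv> deriv (deriv f)"

lemma ap: "a < p" using p1 ab by simp

lemma inU: "s \<in> {a..b} \<Longrightarrow> s \<in> Uf" using abU by blast

lemma pb_ab: "s \<in> {p..b} \<Longrightarrow> s \<in> {a..b}" using ap by auto
lemma pb_U: "s \<in> {p..b} \<Longrightarrow> s \<in> Uf" using pb_ab inU by blast
lemma pb_f1: "s \<in> {p..b} \<Longrightarrow> f1 s > 0" using pf1 by blast
lemma pb_fpos: "s \<in> {p..b} \<Longrightarrow> f s > 0" using pb_ab f_pos by blast

lemma Ck_f1: "Ck k Uf f1" using smf[of "Suc k"] by simp

lemma f_d: "x \<in> Uf \<Longrightarrow> DERIV f x :> f1 x"
  using smf[of "Suc 0"] dd by simp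

lemma f1_d: "x \<in> Uf \<Longrightarrow> DERIV f1 x :> f2 x"
  using Ck_f1[of "Suc 0"] dd by simp

lemma f_cont: "x \<in> Uf \<Longrightarrow> isCont f x" using f_d DERIV_isCont by blast

lemma f_cont_on: "{x..y} \<subseteq> Uf \<Longrightarrow> continuous_on {x..y} f"
  by (intro continuous_at_imp_continuous_on ballI f_cont) blast

lemma f_mono: assumes "p \<le> x" "x < y" "y \<le> b" shows "f x < f y"
proof (rule DERIV_pos_imp_increasing_open[OF assms(2)])
  fix t assume "x < t" "t < y"
  then have "t \<in> {p..b}" "t \<in> Uf" using assms inU ap by auto
  then show "\<exists>D. DERIV f t :> D \<and> D > 0" using f_d pf1 by blast
next
  show "continuous_on {x..y} f" using assms ap abU by (intro f_cont_on) auto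
qed

lemma f_mono_le: "p \<le> x \<Longrightarrow> x \<le> y \<Longrightarrow> y \<le> b \<Longrightarrow> f x \<le> f y"
  using f_mono by (cases "x = y") (auto intro: less_imp_le)

definition finv :: "real \<Rightarrow> real" where
  "finv y = (THE s. s \<in> {p..b} \<and> f s = y)"

lemma finv_f: assumes "s \<in> {p..b}" shows "finv (f s) = s"
  unfolding finv_def
proof (rule the_equality)
  fix t assume t: "t \<in> {p..b} \<and> f t = f s"
  show "t = s"
  proof (rule ccontr)
    assume "t \<noteq> s"
    then have "t < s \<or> s < t" by auto
    then show False using f_mono t assms by (metis atLeastAtMost_iff less_irrefl)
  qed
qed (use assms in auto)

abbreviation "J0 \<equiv> {f p<..<f b}"

lemma finv_J0: assumes "y \<in> J0" shows "finv y \<in> {p<..<b}" "f (finv y) = y"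
proof -
  have "continuous_on {p..b} f" using ap abU by (intro f_cont_on) auto
  then obtain s where s: "s \<in> {p..b}" "f s = y"
    using IVT'[of f p y b] assms p2 by auto
  then have "finv y = s" using finv_f by blast
  moreover have "s \<noteq> p" "s \<noteq> b" using s assms by auto
  ultimately show "finv y \<in> {p<..<b}" "f (finv y) = y" using s by auto
qed

lemma finv_J0': "y \<in> J0 \<Longrightarrow> finv y \<in> {p..b}" using finv_J0(1) by force

lemma finv_cont: assumes "y \<in> J0" shows "isCont finv y"
proof -
  have "isCont finv (f (finv y))"
    by (rule isCont_inverse_function2[of p "finv y" b]) (use finv_J0[OF assms] finv_f f_cont inU ap in auto)
  then show ?thesis using finv_J0[OF assms] by simp
qed

lemma finv_d: assumes "y \<in> J0" shows "DERIV finv y :> inverse (f1 (finv y))"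
proof (rule inv_DERIV[of J0])
  show "DERIV f (finv y) :> f1 (finv y)" using finv_J0[OF assms] inU ap by (intro f_d) auto
  show "f1 (finv y) \<noteq> 0" using finv_J0[OF assms] pf1 by (metis greaterThanLessThan_iff atLeastAtMost_iff less_imp_le less_irrefl)
qed (use assms finv_J0 finv_cont in auto)

lemma Ck_finv: "Ck k J0 finv"
proof (rule Ck_inv[of "{p<..<b}" J0 finv f])
  show "\<And>k. Ck k {p<..<b} f" using smf by (rule Ck_subset) (use inU ap in auto)
  show "\<And>x. x \<in> {p<..<b} \<Longrightarrow> f1 x \<noteq> 0" using pf1 by (metis greaterThanLessThan_iff atLeastAtMost_iff less_imp_le less_irrefl)
qed (use finv_J0 finv_cont in auto)

definition hm :: "real \<Rightarrow> real" where "hm s = f s * (1 - (f1 s)^2) / 2"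

lemma hm_b: "hm b = warped_hawking_mass f b" by (simp add: hm_def warped_hawking_mass_def)

lemma hm_d: "s \<in> Uf \<Longrightarrow> DERIV hm s :> f1 s * (1 - (f1 s)^2 - 2 * f s * f2 s) / 2"
  unfolding hm_def[abs_def]
  by (rule derivative_eq_intros f_d f1_d refl | assumption | simp)+ (simp add: algebra_simps power2_eq_square)

lemma Q_pos: "s \<in> {a..b} \<Longrightarrow> 1 - (f1 s)^2 - 2 * f s * f2 s > 0"
proof -
  assume s: "s \<in> {a..b}"
  have "(2 * (1 - (f1 s)^2) - 4 * f s * f2 s) / (f s)^2 > 0" using psc s by (simp add: warped_scal_def)
  moreover have "f s > 0" using f_pos s by blast
  then have "(f s)^2 > 0" by simp
  ultimately have "2 * (1 - (f1 s)^2) - 4 * f s * f2 s > 0" by (simp add: zero_less_divide_iff)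
  then show ?thesis by simp
qed

lemma hm_d_pos: "s \<in> {p..b} \<Longrightarrow> f1 s * (1 - (f1 s)^2 - 2 * f s * f2 s) / 2 > 0"
  using Q_pos[of s] pf1 ap by simp

lemma hm_le: assumes "s \<in> {p..b}" shows "hm s \<le> hm b"
proof (cases "s = b")
  case False
  then have sb: "s < b" using assms by simp
  have "hm s < hm b"
  proof (rule DERIV_pos_imp_increasing_open[OF sb])
    fix t assume "s < t" "t < b"
    then have t: "t \<in> {p..b}" using assms by auto
    show "\<exists>D. DERIV hm t :> D \<and> D > 0" using hm_d[OF pb_U[OF t]] hm_d_pos[OF t] by blast
  next
    have "\<And>t. t \<in> {s..b} \<Longrightarrow> isCont hm t"
    proof -
      fix t assume "t \<in> {s..b}"
      then have t: "t \<in> {p..b}" using assms by auto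
      show "isCont hm t" by (rule DERIV_isCont[OF hm_d[OF pb_U[OF t]]])
    qed
    then show "continuous_on {s..b} hm" by (intro continuous_at_imp_continuous_on ballI)
  qed
  then show ?thesis by simp
qed simp

lemma Ck_hm: "Ck k Uf hm"
proof -
  have "Ck k Uf (\<lambda>s. f s * (1 - f1 s * f1 s) * (1/2))"
    by (intro Ck_mult Ck_diff Ck_const oUf smf Ck_f1)
  then show ?thesis unfolding hm_def[abs_def] by (rule Ck_cong[OF oUf, rotated]) (simp add: power2_eq_square)
qed

definition mf :: "real \<Rightarrow> real" where "mf y = hm (finv y)"

lemma mf_le: "y \<in> J0 \<Longrightarrow> mf y \<le> warped_hawking_mass f b"
  using hm_le[OF finv_J0'] hm_b by (simp add: mf_def)

lemma mf_lt: assumes "y \<in> J0" shows "2 * mf y < y"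
proof -
  let ?s = "finv y"
  have s: "?s \<in> {p<..<b}" "f ?s = y" using finv_J0[OF assms] by auto
  have "f1 ?s > 0" "f ?s > 0" using pb_f1 pb_fpos finv_J0'[OF assms] by auto
  then have "f ?s * (f1 ?s)^2 > 0" by simp
  then show ?thesis using s by (simp add: mf_def hm_def algebra_simps)
qed

lemma mf_f: "s \<in> {p..b} \<Longrightarrow> mf (f s) = hm s" by (simp add: mf_def finv_f)

lemma mf_d: assumes "y \<in> J0" shows "\<exists>D. DERIV mf y :> D \<and> D \<ge> 0"
proof -
  let ?s = "finv y"
  have s: "?s \<in> {p<..<b}" using finv_J0[OF assms] by auto
  then have sU: "?s \<in> Uf" using inU ap by auto
  have "DERIV mf y :> (f1 ?s * (1 - (f1 ?s)^2 - 2 * f ?s * f2 ?s) / 2) * inverse (f1 ?s)"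
    unfolding mf_def[abs_def] by (rule DERIV_chain2[OF hm_d[OF sU] finv_d[OF assms]])
  moreover have "(f1 ?s * (1 - (f1 ?s)^2 - 2 * f ?s * f2 ?s) / 2) * inverse (f1 ?s) \<ge> 0"
    using hm_d_pos[OF finv_J0'[OF assms]] pb_f1[OF finv_J0'[OF assms]] by (intro mult_nonneg_nonneg) auto
  ultimately show ?thesis by blast
qed

lemma Ck_mf: "Ck k J0 mf"
  unfolding mf_def[abs_def]
  by (rule Ck_comp[OF _ oUf _ Ck_hm Ck_finv]) (use finv_J0' pb_U in auto)

end

lemma Ck_aff: "Ck k UNIV (\<lambda>r. (r - \<alpha>) / (\<beta>::real))"
proof -
  have "Ck k UNIV (\<lambda>r. inverse \<beta> * (r - \<alpha>))"
    by (intro Ck_cmult Ck_diff Ck_id Ck_const open_UNIV)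
  then show ?thesis by (rule Ck_cong[OF open_UNIV, rotated]) (simp add: divide_inverse mult.commute)
qed

lemma Ck_stp_aff: "Ck k UNIV (\<lambda>r. stp ((r - \<alpha>) / (\<beta>::real)))"
  by (rule Ck_comp[OF open_UNIV open_UNIV _ Ck_stp Ck_aff]) simp

lemma stp_aff_d: assumes "(\<beta>::real) > 0" shows "\<exists>D. DERIV (\<lambda>r. stp ((r - \<alpha>) / \<beta>)) r :> D \<and> D \<ge> 0"
proof -
  obtain D where D: "DERIV stp ((r - \<alpha>) / \<beta>) :> D" "D \<ge> 0" using stp_deriv by blast
  have "DERIV (\<lambda>r. (r - \<alpha>) / \<beta>) r :> (1 - 0) / \<beta>" by (intro DERIV_cdivide DERIV_diff DERIV_ident DERIV_const)
  from DERIV_chain2[OF D(1) this] have "DERIV (\<lambda>r. stp ((r - \<alpha>) / \<beta>)) r :> D * ((1 - 0) / \<beta>)" .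
  moreover have "D * ((1 - 0) / \<beta>) \<ge> 0" using D(2) assms by simp
  ultimately show ?thesis by blast
qed

lemma convex_lt: fixes t x y r :: real
  assumes "0 \<le> t" "t \<le> 1" "x < r" "y < r" shows "(1 - t) * x + t * y < r"
proof -
  have "(1 - t) * x \<le> (1 - t) * r" using assms by (intro mult_left_mono) auto
  moreover have "t * y \<le> t * r" using assms by (intro mult_left_mono) auto
  moreover have "(1 - t) * x < (1 - t) * r \<or> t * y < t * r"
    using assms by (cases "t = 1") auto
  ultimately show ?thesis by (auto simp: algebra_simps)
qed

context constr begin

abbreviation "H \<equiv> warped_hawking_mass f b"

definition "q = (p + b) / 2"
definition "cc = f q"
definition "r1 = (max cc (2 * H) + f b) / 2"
definition "r2 = (r1 + f b) / 2"
definition "R1 = max (2 * m_e) (f b) + 1"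
definition "R2 = R1 + 1"

lemma q_facts: "p < q" "q < b" "q \<in> {p..b}" using p2 by (auto simp: q_def)

lemma cc_facts: "f p < cc" "cc < f b" using f_mono q_facts p2 by (auto simp: cc_def)

lemma fb_pos: "f b > 0" using pb_fpos p2 by auto
lemma fp_pos: "f p > 0" using pb_fpos p2 by auto

lemma H_facts: "0 \<le> H" "H < m_e" "2 * H < f b"
proof -
  show "0 \<le> H" "H < m_e" using hawk me by auto
  have "f1 b > 0" using pb_f1 p2 by auto
  then have "f b * (f1 b)^2 > 0" using fb_pos by simp
  then show "2 * H < f b" by (simp add: warped_hawking_mass_def algebra_simps)
qed

lemma r_facts: "cc < r1" "2 * H < r1" "r1 < r2" "r2 < f b" "f p < r1"
  using cc_facts H_facts by (auto simp: r1_def r2_def)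

lemma R_facts: "2 * m_e < R1" "f b < R1" "r2 < R1" "R1 < R2" "cc < R2" "R2 > 0"
  using r_facts cc_facts fb_pos by (auto simp: R1_def R2_def)

definition ps :: "real \<Rightarrow> real" where "ps r = stp ((r - r1) / (r2 - r1))"
definition ps2 :: "real \<Rightarrow> real" where "ps2 r = stp ((r - R1) / 1)"
definition M :: "real \<Rightarrow> real" where "M r = H + ps2 r * (m_e - H)"
definition mm :: "real \<Rightarrow> real" where
  "mm r = (if r < r2 then (1 - ps r) * mf r + ps r * M r else M r)"

abbreviation "J \<equiv> {f p<..}"

lemma ps_0: assumes "r \<le> r1" shows "ps r = 0"
  unfolding ps_def by (rule stp_0, rule divide_nonpos_pos) (use assms r_facts in auto)
lemma ps_1: "r \<ge> r2 \<Longrightarrow> ps r = 1" using r_facts by (simp add: ps_def stp_1)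
lemma ps_b: "0 \<le> ps r" "ps r \<le> 1" by (simp_all add: ps_def stp_ge0 stp_le1)
lemma ps2_0: "r \<le> R1 \<Longrightarrow> ps2 r = 0" by (simp add: ps2_def stp_0)
lemma ps2_1: "r \<ge> R2 \<Longrightarrow> ps2 r = 1" by (simp add: ps2_def stp_1 R2_def)
lemma ps2_b: "0 \<le> ps2 r" "ps2 r \<le> 1" by (simp_all add: ps2_def stp_ge0 stp_le1)

lemma M_b: "H \<le> M r" "M r \<le> m_e"
proof -
  have "0 \<le> ps2 r * (m_e - H)" using ps2_b H_facts by simp
  then show "H \<le> M r" by (simp add: M_def)
  have "ps2 r * (m_e - H) \<le> 1 * (m_e - H)" using ps2_b H_facts by (intro mult_right_mono) auto
  then show "M r \<le> m_e" by (simp add: M_def)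
qed

lemma M_lt: assumes "r > r1" shows "2 * M r < r"
proof (cases "r \<le> R1")
  case True
  then have "M r = H" by (simp add: M_def ps2_0)
  then show ?thesis using r_facts assms by simp
next
  case False
  then show ?thesis using M_b[of r] R_facts by simp
qed

lemma Ck_ps: "Ck k UNIV ps" unfolding ps_def[abs_def] by (rule Ck_stp_aff)
lemma Ck_M: "Ck k UNIV M"
  unfolding M_def[abs_def] ps2_def[abs_def]
  by (intro Ck_add Ck_mult Ck_const Ck_stp_aff open_UNIV)

lemma ps_d: "\<exists>D. DERIV ps r :> D \<and> D \<ge> 0"
  unfolding ps_def[abs_def] by (rule stp_aff_d) (use r_facts in simp)

lemma M_d: "\<exists>D. DERIV M r :> D \<and> D \<ge> 0"
proof -
  obtain D where D: "DERIV ps2 r :> D" "D \<ge> 0" unfolding ps2_def[abs_def] using stp_aff_d[of 1] by auto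
  have "DERIV M r :> 0 + D * (m_e - H)" unfolding M_def[abs_def]
    by (intro DERIV_add DERIV_const DERIV_cmult_right D(1))
  moreover have "0 + D * (m_e - H) \<ge> 0" using D(2) H_facts by simp
  ultimately show ?thesis by blast
qed

lemma mm_J0: "r \<in> J0 \<Longrightarrow> mm r = (1 - ps r) * mf r + ps r * M r"
  by (cases "r < r2") (auto simp: mm_def ps_1)

lemma mm_big: "r > r2 \<Longrightarrow> mm r = M r" by (simp add: mm_def)

lemma J_cover: "J \<subseteq> J0 \<union> {r2<..}" using r_facts by auto

lemma Ck_mm: "Ck k J mm"
proof -
  have "Ck k J0 (\<lambda>r. (1 - ps r) * mf r + ps r * M r)"
    by (intro Ck_add Ck_mult Ck_diff Ck_const Ck_mf Ck_subset[OF Ck_ps] Ck_subset[OF Ck_M] open_greaterThanLessThan subset_UNIV)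
  then have 1: "Ck k J0 mm" by (rule Ck_cong[OF open_greaterThanLessThan, rotated]) (simp add: mm_J0)
  have "Ck k {r2<..} M" by (rule Ck_subset[OF Ck_M]) simp
  then have 2: "Ck k {r2<..} mm" by (rule Ck_cong[OF open_greaterThan, rotated]) (simp add: mm_big)
  from Ck_union[OF 1 2] show ?thesis by (rule Ck_subset) (rule J_cover)
qed

lemma mm_lt: assumes "r \<in> J" shows "2 * mm r < r"
proof (cases "r < r2")
  case True
  then have r: "r \<in> J0" using assms r_facts by auto
  show ?thesis
  proof (cases "r \<le> r1")
    case True
    then show ?thesis using mm_J0[OF r] ps_0 mf_lt[OF r] by simp
  next
    case False
    have "(1 - ps r) * (2 * mf r) + ps r * (2 * M r) < r"
      by (rule convex_lt[OF ps_b mf_lt[OF r] M_lt]) (use False in simp)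
    then show ?thesis using mm_J0[OF r] by (simp add: algebra_simps)
  qed
next
  case False
  then show ?thesis using mm_big M_lt r_facts by (cases "r = r2") (auto simp: mm_def)
qed

lemma mm_d: assumes "r \<in> J" shows "\<exists>D. DERIV mm r :> D \<and> D \<ge> 0"
proof (cases "r \<in> J0")
  case True
  obtain Dp where Dp: "DERIV ps r :> Dp" "Dp \<ge> 0" using ps_d by blast
  obtain DM where DM: "DERIV M r :> DM" "DM \<ge> 0" using M_d by blast
  obtain Df where Df: "DERIV mf r :> Df" "Df \<ge> 0" using mf_d[OF True] by blast
  have "DERIV (\<lambda>r. (1 - ps r) * mf r + ps r * M r) r :>
      ((1 - ps r) * Df + (0 - Dp) * mf r) + (ps r * DM + Dp * M r)"
    by (intro DERIV_add DERIV_mult' DERIV_diff DERIV_const Dp(1) DM(1) Df(1))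
  then have d: "DERIV mm r :> ((1 - ps r) * Df + (0 - Dp) * mf r) + (ps r * DM + Dp * M r)"
    by (rule has_field_derivative_transform_within_open[OF _ open_greaterThanLessThan True])
      (simp add: mm_J0)
  have "mf r \<le> M r" using mf_le[OF True] M_b by (meson order_trans)
  then have "Dp * (M r - mf r) \<ge> 0" using Dp by simp
  moreover have "(1 - ps r) * Df \<ge> 0" "ps r * DM \<ge> 0" using ps_b Df DM by simp_all
  ultimately have "((1 - ps r) * Df + (0 - Dp) * mf r) + (ps r * DM + Dp * M r) \<ge> 0"
    by (simp add: algebra_simps)
  with d show ?thesis by blast
next
  case False
  then have r: "r > r2" using assms r_facts by auto
  obtain DM where DM: "DERIV M r :> DM" "DM \<ge> 0" using M_d by blast
  have "DERIV mm r :> DM"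
    by (rule has_field_derivative_transform_within_open[OF DM(1) open_greaterThan, of r2]) (use r in \<open>auto simp: mm_big\<close>)
  with DM show ?thesis by blast
qed

lemma mm_me: "r \<ge> R2 \<Longrightarrow> mm r = m_e"
  using R_facts by (simp add: mm_big M_def ps2_1)

lemma mm_nonneg: assumes "r \<ge> R1" shows "mm r \<ge> 0"
proof -
  have "r > r2" using assms R_facts by linarith
  then have "mm r = M r" by (rule mm_big)
  then show ?thesis using M_b(1)[of r] H_facts(1) by linarith
qed

lemma mm_mf: "r \<in> J0 \<Longrightarrow> r \<le> r1 \<Longrightarrow> mm r = mf r"
  by (simp add: mm_J0 ps_0)

end

context constr begin

lemma aux_inv: "(s::real) \<noteq> 0 \<Longrightarrow> inverse s / 2 * X * s = X / 2"
  by (simp add: field_simps)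

definition G :: "real \<Rightarrow> real" where "G r = sqrt (1 - 2 * mm r / r)"
definition gi :: "real \<Rightarrow> real" where "gi r = inverse (G r)"

lemma J_pos: "r \<in> J \<Longrightarrow> r > 0" using fp_pos by auto

lemma w_pos: assumes "r \<in> J" shows "1 - 2 * mm r / r > 0"
proof -
  have "2 * mm r / r < 1" using mm_lt[OF assms] J_pos[OF assms] by (simp add: divide_less_eq)
  then show ?thesis by simp
qed

lemma G_pos: "r \<in> J \<Longrightarrow> G r > 0" using w_pos by (simp add: G_def)
lemma gi_pos: "r \<in> J \<Longrightarrow> gi r > 0" using G_pos by (simp add: gi_def)

lemma Ck_w: "Ck k J (\<lambda>r. 1 - 2 * mm r / r)"
proof -
  have "Ck k J (\<lambda>r. 1 - 2 * mm r * inverse r)"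
  proof (intro Ck_diff Ck_const Ck_mult Ck_cmult Ck_mm open_greaterThan)
    show "Ck k J inverse" by (rule Ck_inverse_comp[OF open_greaterThan Ck_id]) (use J_pos in force)
  qed
  then show ?thesis by (rule Ck_cong[OF open_greaterThan, rotated]) (simp add: divide_inverse)
qed

lemma Ck_G: "Ck k J G"
  unfolding G_def[abs_def] by (rule Ck_sqrt_comp[OF open_greaterThan Ck_w w_pos])

lemma Ck_gi: "Ck k J gi"
  unfolding gi_def[abs_def] by (rule Ck_inverse_comp[OF open_greaterThan Ck_G]) (use G_pos in force)

lemma G_dd: "r \<in> J \<Longrightarrow> DERIV G r :> deriv G r"
  using Ck_G[of "Suc 0"] dd by simp

lemma gi_cont: "r \<in> J \<Longrightarrow> isCont gi r"
  using Ck_gi[of "Suc 0"] dd DERIV_isCont by fastforce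

lemma G_key: assumes r: "r \<in> J" shows "1 - (G r)^2 - 2 * r * (deriv G r * G r) \<ge> 0"
proof -
  obtain D where D: "DERIV mm r :> D" "D \<ge> 0" using mm_d[OF r] by blast
  have r0: "r > 0" using J_pos[OF r] by simp
  let ?w = "1 - 2 * mm r / r"
  have wp: "?w > 0" using w_pos[OF r] .
  have dq: "DERIV (\<lambda>x. 2 * mm x / x) r :> (2 * D * r - 1 * (2 * mm r)) / (r ^ Suc (Suc 0))"
    by (rule DERIV_quotient[OF DERIV_cmult[OF D(1)] DERIV_ident]) (use r0 in simp)
  have dw: "DERIV (\<lambda>r. 1 - 2 * mm r / r) r :> 0 - (2 * D * r - 1 * (2 * mm r)) / (r ^ 2)"
    using DERIV_diff[OF DERIV_const dq] by (simp add: numeral_2_eq_2)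
  have "DERIV G r :> inverse (sqrt ?w) / 2 * (0 - (2 * D * r - 1 * (2 * mm r)) / (r ^ 2))"
    unfolding G_def[abs_def] by (rule DERIV_chain2[OF DERIV_real_sqrt[OF wp] dw])
  then have dG: "deriv G r = inverse (sqrt ?w) / 2 * (0 - (2 * D * r - 1 * (2 * mm r)) / (r ^ 2))"
    by (rule DERIV_imp_deriv)
  have GG: "G r = sqrt ?w" by (simp add: G_def)
  have nz: "sqrt ?w \<noteq> 0" using real_sqrt_gt_zero[OF wp] by linarith
  have P: "deriv G r * G r = (0 - (2 * D * r - 1 * (2 * mm r)) / (r ^ 2)) / 2"
    unfolding dG GG by (rule aux_inv[OF nz])
  have Q: "(G r)^2 = ?w" using wp by (simp add: G_def)
  have "1 - (G r)^2 - 2 * r * (deriv G r * G r) = 1 - ?w - 2 * r * ((0 - (2 * D * r - 1 * (2 * mm r)) / (r ^ 2)) / 2)"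
    by (simp only: P Q)
  also have "\<dots> = 2 * D" using r0 by (simp add: field_simps power2_eq_square)
  finally have "1 - (G r)^2 - 2 * r * (deriv G r * G r) = 2 * D" .
  then show ?thesis using D(2) by simp
qed

lemma G_le1: assumes "r \<in> J" "mm r \<ge> 0" shows "G r \<le> 1"
proof -
  have "2 * mm r / r \<ge> 0" using assms J_pos[OF assms(1)] by simp
  then show ?thesis by (simp add: G_def)
qed

definition S :: "real \<Rightarrow> real" where "S r = q + integral {cc..r} gi"

lemma cc_J: "x \<ge> cc \<Longrightarrow> x \<in> J" using cc_facts by auto

lemma gi_cont_cc: "x \<ge> cc \<Longrightarrow> isCont gi x" using gi_cont cc_J by blast

lemma S_d: assumes "r > cc" shows "DERIV S r :> gi r"
proof -
  have "DERIV (\<lambda>r. q + integral {cc..r} gi) r :> 0 + gi r"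
    by (rule DERIV_add[OF DERIV_const int_DERIV[OF gi_cont_cc assms]])
  then show ?thesis by (simp add: S_def[abs_def])
qed

lemma S_cont: "continuous_on {cc..R} S"
  unfolding S_def[abs_def]
  by (intro continuous_on_add continuous_on_const int_cont gi_cont_cc)

lemma S_cc: "S cc = q" by (simp add: S_def)

lemma S_mono: assumes "cc \<le> x" "x < y" shows "S x < S y"
proof (rule DERIV_pos_imp_increasing_open[OF assms(2)])
  fix t assume "x < t" "t < y"
  then have "t > cc" using assms by simp
  then show "\<exists>D. DERIV S t :> D \<and> D > 0" using S_d gi_pos cc_J by (meson less_imp_le)
next
  show "continuous_on {x..y} S" by (rule continuous_on_subset[OF S_cont[of y]]) (use assms in auto)
qed

lemma S_big: assumes "r \<ge> R1" shows "S r \<ge> S R1 + (r - R1)"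
proof (cases "r = R1")
  case False
  then have lt: "R1 < r" using assms by simp
  have "\<And>x. R1 \<le> x \<Longrightarrow> x \<le> r \<Longrightarrow> DERIV S x :> gi x" using R_facts cc_facts S_d by auto
  from MVT2[OF lt this] obtain z where z: "R1 < z" "z < r" "S r - S R1 = (r - R1) * gi z" by blast
  have zJ: "z \<in> J" using z R_facts cc_facts by auto
  have "G z \<le> 1" "G z > 0" using G_le1[OF zJ mm_nonneg] G_pos[OF zJ] z by auto
  then have "gi z \<ge> 1" by (simp add: gi_def one_le_inverse_iff)
  then have "(r - R1) * gi z \<ge> (r - R1) * 1" using lt by (intro mult_left_mono) auto
  then have "r - R1 \<le> (r - R1) * gi z" by simp
  then show ?thesis using z(3) by linarith
qed simp

definition Sinv :: "real \<Rightarrow> real" where "Sinv y = (THE r. cc \<le> r \<and> S r = y)"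

lemma Sinv_S: assumes "cc \<le> r" shows "Sinv (S r) = r"
  unfolding Sinv_def
proof (rule the_equality)
  fix t assume t: "cc \<le> t \<and> S t = S r"
  show "t = r"
  proof (rule ccontr)
    assume "t \<noteq> r"
    then have "t < r \<or> r < t" by auto
    then show False using S_mono t assms by (metis less_irrefl)
  qed
qed (use assms in auto)

lemma Sinv_ex: assumes "y \<ge> q" shows "cc \<le> Sinv y" "S (Sinv y) = y"
proof -
  define R where "R = max R1 (R1 + (y - S R1))"
  have "S R \<ge> S R1 + (R - R1)" by (rule S_big) (simp add: R_def)
  then have "y \<le> S R" by (simp add: R_def)
  moreover have "S cc \<le> y" using assms S_cc by simp
  moreover have "cc \<le> R" using R_facts cc_facts by (simp add: R_def)
  ultimately obtain r where r: "r \<in> {cc..R}" "S r = y" using IVT'[of S cc y R] S_cont by auto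
  then have "Sinv y = r" using Sinv_S by auto
  then show "cc \<le> Sinv y" "S (Sinv y) = y" using r by auto
qed

lemma Sinv_gt: assumes "y > q" shows "Sinv y > cc"
proof -
  have "Sinv y \<noteq> cc" using Sinv_ex[of y] assms S_cc by auto
  then show ?thesis using Sinv_ex[of y] assms by simp
qed

lemma Sinv_ge: assumes "y \<ge> q" "S R \<le> y" "R \<ge> cc" shows "Sinv y \<ge> R"
proof (rule ccontr)
  assume "\<not> Sinv y \<ge> R"
  then have lt: "Sinv y < R" by simp
  have "S (Sinv y) < S R" by (rule S_mono[OF Sinv_ex(1)[OF assms(1)] lt])
  then show False using Sinv_ex(2)[OF assms(1)] assms(2) by simp
qed

lemma Sinv_cont: assumes "y > q" shows "isCont Sinv y"
proof -
  let ?x = "Sinv y"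
  have x: "?x > cc" by (rule Sinv_gt[OF assms])
  have "isCont Sinv (S ?x)"
  proof (rule isCont_inverse_function2[of "(cc + ?x)/2" ?x "?x + 1"])
    show "(cc + ?x) / 2 < ?x" "?x < ?x + 1" using x by auto
    show "\<And>z. (cc + ?x) / 2 \<le> z \<Longrightarrow> z \<le> ?x + 1 \<Longrightarrow> Sinv (S z) = z" using x Sinv_S by simp
    show "\<And>z. (cc + ?x) / 2 \<le> z \<Longrightarrow> z \<le> ?x + 1 \<Longrightarrow> isCont S z"
      using x by (intro DERIV_isCont[OF S_d]) simp
  qed
  then show ?thesis using Sinv_ex assms by simp
qed

lemma Sinv_d: assumes "y > q" shows "DERIV Sinv y :> G (Sinv y)"
proof -
  have x: "Sinv y > cc" by (rule Sinv_gt[OF assms])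
  have "DERIV Sinv y :> inverse (gi (Sinv y))"
  proof (rule inv_DERIV[of "{q<..}"])
    show "DERIV S (Sinv y) :> gi (Sinv y)" using S_d[OF x] .
    show "gi (Sinv y) \<noteq> 0" using gi_pos cc_J x by (metis less_imp_le less_irrefl)
  qed (use assms Sinv_ex Sinv_cont in auto)
  then show ?thesis by (simp add: gi_def)
qed

lemma Ck_S: "Ck k {cc<..} S"
proof -
  have "Ck (Suc k) {cc<..} S"
    by (rule Ck_SucI[OF open_greaterThan S_d]) (simp, rule Ck_subset[OF Ck_gi], use cc_facts in auto)
  then show ?thesis by (rule Ck_Suc_imp)
qed

lemma Ck_Sinv: "Ck k {q<..} Sinv"
proof (rule Ck_inv[of "{cc<..}" "{q<..}" Sinv S])
  show "\<And>x. x \<in> {cc<..} \<Longrightarrow> deriv S x \<noteq> 0"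
    using S_d gi_pos cc_J DERIV_imp_deriv by (metis greaterThan_iff less_imp_le less_irrefl)
  show "\<And>k. Ck k {cc<..} S" by (rule Ck_S)
qed (use Sinv_gt Sinv_ex Sinv_cont in auto)

lemma G_f: assumes "t \<in> {p..b}" "f t \<in> J0" "f t \<le> r1" shows "G (f t) = f1 t"
proof -
  have "mm (f t) = hm t" using mm_mf[OF assms(2,3)] mf_f[OF assms(1)] by simp
  moreover have "f t > 0" using pb_fpos[OF assms(1)] .
  ultimately have "1 - 2 * mm (f t) / f t = (f1 t)^2" by (simp add: hm_def field_simps)
  then show ?thesis using pb_f1[OF assms(1)] by (simp add: G_def)
qed

lemma S_f: assumes "s \<in> {q..b}" "f s \<le> r1" shows "S (f s) = s"
proof (cases "s = q")
  case True then show ?thesis using S_cc by (simp add: cc_def)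
next
  case False
  then have qs: "q < s" using assms by simp
  have sub: "{q..s} \<subseteq> Uf" using assms q_facts by (intro subsetI pb_U) auto
  have img: "f ` {q..s} \<subseteq> {cc..r1}"
  proof
    fix y assume "y \<in> f ` {q..s}"
    then obtain t where t: "t \<in> {q..s}" "y = f t" by blast
    have "f q \<le> f t" "f t \<le> f s" using t assms q_facts by (auto intro!: f_mono_le)
    then show "y \<in> {cc..r1}" using t assms by (simp add: cc_def)
  qed
  have "continuous_on {q..s} (\<lambda>t. S (f t) - t)"
    by (intro continuous_on_diff continuous_on_id continuous_on_compose2[OF S_cont f_cont_on[OF sub] img])
  moreover have "DERIV (\<lambda>t. S (f t) - t) t :> 0" if t: "q < t" "t < s" for t
  proof -
    have tpb: "t \<in> {p..b}" using t assms q_facts by auto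
    have "f q < f t" "f t < f s" using t assms q_facts by (auto intro!: f_mono)
    then have ft: "f t > cc" "f t < r1" using assms by (auto simp: cc_def)
    then have ftJ: "f t \<in> J0" using cc_facts r_facts by auto
    have "DERIV (\<lambda>t. S (f t)) t :> gi (f t) * f1 t"
      by (rule DERIV_chain2[OF S_d[OF ft(1)] f_d[OF pb_U[OF tpb]]])
    moreover have "gi (f t) * f1 t = 1" using G_f[OF tpb ftJ] ft pb_f1[OF tpb] by (simp add: gi_def)
    ultimately have "DERIV (\<lambda>t. S (f t)) t :> 1" by simp
    then show ?thesis using DERIV_diff[OF _ DERIV_ident] by fastforce
  qed
  ultimately have "S (f s) - s = S (f q) - q" using DERIV_isconst_end[OF qs] by blast
  then show ?thesis using S_cc by (simp add: cc_def)
qed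

end

context constr begin

definition F :: "real \<Rightarrow> real" where "F s = (if s \<le> q then f s else Sinv s)"
definition W :: "real set" where "W = (Uf \<inter> {..<q}) \<union> ({p<..<b} \<inter> f -` {..<r1})"

lemma oW: "open W"
proof -
  have "continuous_on {p<..<b} f"
    by (intro continuous_at_imp_continuous_on ballI f_cont pb_U) auto
  then have "open ({p<..<b} \<inter> f -` {..<r1})"
    by (rule continuous_open_preimage) auto
  then show ?thesis unfolding W_def by (rule open_Un[OF open_Int[OF oUf open_lessThan]])
qed

lemma W_Uf: "W \<subseteq> Uf" unfolding W_def using pb_U by auto

lemma F_W: assumes "t \<in> W" shows "F t = f t"
proof (cases "t \<le> q")
  case True then show ?thesis by (simp add: F_def)
next
  case False
  then have t: "t \<in> {p<..<b}" "f t < r1" using assms by (auto simp: W_def)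
  have tq: "t \<in> {q..b}" using t False by auto
  have "S (f t) = t" by (rule S_f[OF tq]) (use t in simp)
  moreover have "cc \<le> f t" unfolding cc_def using tq q_facts by (intro f_mono_le) auto
  ultimately have "Sinv t = f t" using Sinv_S by metis
  then show ?thesis using False by (simp add: F_def)
qed

lemma aq_W: assumes "s \<in> {a..q}" shows "s \<in> W"
proof (cases "s < q")
  case True
  then have "s \<in> Uf" using assms q_facts inU by auto
  then show ?thesis using True by (simp add: W_def)
next
  case False
  then have "s = q" using assms by simp
  then show ?thesis using q_facts r_facts by (simp add: W_def cc_def[symmetric])
qed

lemma Ck_F: "Ck k (W \<union> {q<..}) F"
proof (rule Ck_union)
  show "Ck k W F" by (rule Ck_cong[OF oW _ Ck_subset[OF smf W_Uf]]) (simp add: F_W)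
  show "Ck k {q<..} F" by (rule Ck_cong[OF open_greaterThan _ Ck_Sinv]) (simp add: F_def)
qed

lemma F_smooth: "smooth_on {a..} F"
  unfolding smooth_on_def
proof (intro exI conjI)
  show "open (W \<union> {q<..})" using oW by auto
  show "{a..} \<subseteq> W \<union> {q<..}" using aq_W by force
  show "\<forall>k. \<forall>x\<in>W \<union> {q<..}. (deriv ^^ k) F differentiable (at x)"
    using Ck_F sm_iff[of "W \<union> {q<..}" F] by (simp add: sm_def)
qed

lemma dF_W: "s \<in> W \<Longrightarrow> deriv F s = f1 s"
  using deriv_local[OF oW _ F_W] by simp

lemma ddF_W: "s \<in> W \<Longrightarrow> deriv (deriv F) s = f2 s"
  using deriv_local[OF oW _ dF_W] by simp

lemma dF_V: "s > q \<Longrightarrow> deriv F s = G (Sinv s)"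
proof -
  assume s: "s > q"
  have "deriv F s = deriv Sinv s" using deriv_local[OF open_greaterThan, of s q F Sinv] s by (simp add: F_def)
  also have "\<dots> = G (Sinv s)" by (rule DERIV_imp_deriv[OF Sinv_d[OF s]])
  finally show ?thesis .
qed

lemma ddF_V: assumes s: "s > q" shows "deriv (deriv F) s = deriv G (Sinv s) * G (Sinv s)"
proof -
  have "deriv (deriv F) s = deriv (\<lambda>t. G (Sinv t)) s"
    using deriv_local[OF open_greaterThan, of s q "deriv F" "\<lambda>t. G (Sinv t)"] s dF_V by simp
  also have "\<dots> = deriv G (Sinv s) * G (Sinv s)"
  proof (rule DERIV_imp_deriv, rule DERIV_chain2[OF G_dd Sinv_d[OF s]])
    show "Sinv s \<in> J" using Sinv_gt[OF s] cc_facts by auto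
  qed
  finally show ?thesis .
qed

lemma result:
  shows "\<exists>F :: real \<Rightarrow> real.
           smooth_on {a..} F
         \<and> (\<forall>s\<ge>a. F s > 0)
         \<and> (\<forall>s\<ge>a. warped_scal F s \<ge> 0)
         \<and> (\<exists>s1\<ge>a. schwarzschild_end m_e F s1)
         \<and> (\<forall>s\<in>{a..<(a+b)/2}. F s = f s)
         \<and> ((\<forall>s\<in>{a..b}. deriv f s > 0) \<longrightarrow> (\<forall>s\<ge>a. warped_mean_curv F s > 0))"
proof (rule exI[of _ F], intro conjI)
  show "smooth_on {a..} F" by (rule F_smooth)
  have SJ: "s > q \<Longrightarrow> Sinv s \<in> J" for s using Sinv_gt cc_facts by fastforce
  have SP: "s > q \<Longrightarrow> Sinv s > 0" for s using SJ J_pos by blast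
  have lowW: "a \<le> s \<Longrightarrow> s \<le> q \<Longrightarrow> s \<in> W" for s using aq_W by auto
  have lowab: "a \<le> s \<Longrightarrow> s \<le> q \<Longrightarrow> s \<in> {a..b}" for s using q_facts by auto
  show "\<forall>s\<ge>a. F s > 0"
  proof (intro allI impI)
    fix s assume "a \<le> s"
    then show "F s > 0" using f_pos lowab SP by (cases "s \<le> q") (auto simp: F_def)
  qed
  show "\<forall>s\<ge>a. warped_scal F s \<ge> 0"
  proof (intro allI impI)
    fix s assume as: "a \<le> s"
    show "warped_scal F s \<ge> 0"
    proof (cases "s \<le> q")
      case True
      have "warped_scal F s = warped_scal f s"
        unfolding warped_scal_def using F_W dF_W ddF_W lowW[OF as True] by simp
      then show ?thesis using psc lowab[OF as True] by (simp add: less_imp_le)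
    next
      case False
      then have s: "s > q" by simp
      let ?r = "Sinv s"
      have Fs: "F s = ?r" using s by (simp add: F_def)
      have "warped_scal F s = 2 * (1 - (G ?r)^2 - 2 * ?r * (deriv G ?r * G ?r)) / ?r^2"
        unfolding warped_scal_def Fs dF_V[OF s] ddF_V[OF s] by (simp add: algebra_simps)
      moreover have "1 - (G ?r)^2 - 2 * ?r * (deriv G ?r * G ?r) \<ge> 0" by (rule G_key[OF SJ[OF s]])
      ultimately show ?thesis by simp
    qed
  qed
  show "\<exists>s1\<ge>a. schwarzschild_end m_e F s1"
  proof (intro exI conjI)
    have "S cc < S R2" using S_mono R_facts by simp
    then have qS: "q < S R2" using S_cc by simp
    then show "a \<le> S R2" using q_facts ap by simp
    show "schwarzschild_end m_e F (S R2)"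
      unfolding schwarzschild_end_def
    proof (intro allI impI)
      fix s assume s1: "S R2 \<le> s"
      then have s: "s > q" using qS by simp
      have rR: "Sinv s \<ge> R2" by (rule Sinv_ge) (use s s1 R_facts cc_facts in auto)
      have "F s = Sinv s" using s by (simp add: F_def)
      moreover have "deriv F s = G (Sinv s)" by (rule dF_V[OF s])
      moreover have "mm (Sinv s) = m_e" by (rule mm_me[OF rR])
      ultimately show "2 * m_e < F s \<and> deriv F s = sqrt (1 - 2 * m_e / F s)"
        using rR R_facts by (simp add: G_def)
    qed
  qed
  show "\<forall>s\<in>{a..<(a+b)/2}. F s = f s"
    using p1 q_facts by (auto simp: F_def)
  show "(\<forall>s\<in>{a..b}. deriv f s > 0) \<longrightarrow> (\<forall>s\<ge>a. warped_mean_curv F s > 0)"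
  proof (intro impI allI)
    fix s assume pos: "\<forall>s\<in>{a..b}. deriv f s > 0" and as: "a \<le> s"
    show "warped_mean_curv F s > 0"
    proof (cases "s \<le> q")
      case True
      have "F s = f s" "deriv F s = f1 s" using F_W dF_W lowW[OF as True] by auto
      then show ?thesis using pos f_pos lowab[OF as True] by (simp add: warped_mean_curv_def)
    next
      case False
      then have s: "s > q" by simp
      have "F s = Sinv s" using s by (simp add: F_def)
      then show ?thesis using dF_V[OF s] G_pos[OF SJ[OF s]] SP[OF s] by (simp add: warped_mean_curv_def)
    qed
  qed
qed

end

theorem proposition2p2:
  fixes f :: "real \<Rightarrow> real" and a b m_e :: real
  assumes ab: "a < b"
    and f_smooth: "smooth_on {a..b} f"
    and f_pos: "\<forall>s\<in>{a..b}. f s > 0"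
    and psc: "\<forall>s\<in>{a..b}. warped_scal f s > 0"
    and mean_pos: "warped_mean_curv f b > 0"
    and hawking_nonneg: "warped_hawking_mass f b \<ge> 0"
    and me: "m_e > warped_hawking_mass f b"
  shows "\<exists>F :: real \<Rightarrow> real.
           smooth_on {a..} F
         \<and> (\<forall>s\<ge>a. F s > 0)
         \<and> (\<forall>s\<ge>a. warped_scal F s \<ge> 0)
         \<and> (\<exists>s1\<ge>a. schwarzschild_end m_e F s1)
         \<and> (\<forall>s\<in>{a..<(a+b)/2}. F s = f s)
         \<and> ((\<forall>s\<in>{a..b}. deriv f s > 0) \<longrightarrow> (\<forall>s\<ge>a. warped_mean_curv F s > 0))"
proof -
  obtain U where U: "open U" "{a..b} \<subseteq> U" "\<forall>k. \<forall>x\<in>U. (deriv ^^ k) f differentiable (at x)"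
    using f_smooth unfolding smooth_on_def by blast
  have smU: "\<And>k. Ck k U f" using U(3) sm_iff[of U f] by (simp add: sm_def)
  have bU: "b \<in> U" using U(2) ab by auto
  have fb: "f b > 0" using f_pos ab by auto
  have f1b: "deriv f b > 0" using mean_pos fb by (simp add: warped_mean_curv_def zero_less_divide_iff)
  have "isCont (deriv f) b"
  proof -
    have "Ck (Suc (Suc 0)) U f" by (rule smU)
    then have "deriv f differentiable (at b)" using bU by simp
    then show ?thesis by (rule differentiable_imp_continuous_within)
  qed
  then have "deriv f \<midarrow>b\<rightarrow> deriv f b" by (simp add: isCont_def)
  from LIM_fun_gt_zero[OF this f1b] obtain r where r: "r > 0"
    "\<And>x. x \<noteq> b \<and> \<bar>b - x\<bar> < r \<Longrightarrow> 0 < deriv f x" by blast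
  define p where "p = max ((a + 3 * b) / 4) (b - r / 2)"
  have "(a + b) / 2 < (a + 3 * b) / 4" using ab by simp
  moreover have "(a + 3 * b) / 4 \<le> p" by (simp add: p_def)
  ultimately have p1a: "(a + b) / 2 < p" by linarith
  have p1b: "p < b" using ab r(1) by (simp add: p_def)
  note p1 = p1a p1b
  have p2: "\<forall>s\<in>{p..b}. deriv f s > 0"
  proof
    fix s assume s: "s \<in> {p..b}"
    show "deriv f s > 0"
    proof (cases "s = b")
      case True then show ?thesis using f1b by simp
    next
      case False
      have "\<bar>b - s\<bar> < r" using s r(1) by (auto simp: p_def)
      then show ?thesis using r(2) False by blast
    qed
  qed
  interpret constr f a b m_e p U
    by unfold_locales (use ab U smU f_pos psc hawking_nonneg me p1 p2 in auto)
  show ?thesis by (rule result)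
qed

end
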